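(* There exist a financial system $S$ in the base model (all contracts of the same priority) and distinct banks $u,v_1,v_2$, with a debt contract of positive weight from $u$ to $v_1$ and one from $u$ to $v_2$, such that the following holds. For $(s_1,s_2)\in\{C,D\}^2$ let $S_{s_1s_2}$ be the system obtained from $S$ by deleting the debt contract from $u$ to $v_i$ for exactly those $i$ with $s_i=C$. Then each $S_{s_1s_2}$ has exactly one solution, and the payoffs $(q_{v_1},q_{v_2})$ at that solution are $(3,3)$ for $CC$, $(8/3,8/3)$ for $DD$, $(3/2,4)$ for $CD$, and $(4,3/2)$ for $DC$. In particular, in the two-player game where bank $v_i$ chooses $s_i$ and receives its payoff in $S_{s_1s_2}$, $D$ is a strictly dominant strategy for each player, while both players receive strictly more under $CC$ than under $DD$.
   Context: A financial system with payment priorities consists of: a finite set $V$ of banks; external assets $e_v\ge 0$ for each $v\in V$; a number $P\ge 1$ of priority levels; and a finite set of contracts, each of which is either a debt contract from a debtor $u$ to a creditor $v\neq u$ with weight $c>0$, or a credit default swap (CDS) from a debtor $u$ to a creditor $v\neq u$ in reference to a bank $w\notin\{u,v\}$ (the reference entity) with weight $c>0$. Every contract has a priority in $\{1,\dots,P\}$ (1 is the highest priority). It is assumed that every bank that is the reference entity of some CDS is the debtor of at least one debt contract of positive weight. Given a recovery rate vector $r\in[0,1]^V$: the liability of a contract $k$ is $l_k(r)=c$ if $k$ is a debt of weight $c$, and $l_k(r)=c\,(1-r_w)$ if $k$ is a CDS of weight $c$ in reference to $w$. For a bank $v$, $l_v(r)$ is the sum of the liabilities of the contracts with debtor $v$;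 $l_v^{(\rho)}(r)$ is the sum of the liabilities of contracts with debtor $v$ and priority $\rho$; and $l_v^{(\le\rho)}(r)=\sum_{i=1}^{\rho}l_v^{(i)}(r)$ (with $l_v^{(\le 0)}=0$). The payment on a contract $k$ with debtor $v$ and priority $\rho$ is $p_k(r)=l_k(r)\cdot\min\{1,\max\{0,(r_v l_v(r)-l_v^{(\le\rho-1)}(r))/l_v^{(\rho)}(r)\}\}$ (and $p_k(r)=0$ if $l_v^{(\rho)}(r)=0$). The assets of $v$ are $a_v(r)=e_v+\sum_k p_k(r)$, summing over contracts $k$ with creditor $v$. A vector $r\in[0,1]^V$ is a solution (clearing vector) if for every $v\in V$: $r_v=1$ when $a_v(r)\ge l_v(r)$, and $r_v=a_v(r)/l_v(r)$ when $a_v(r)<l_v(r)$. The payoff of $v$ is $q_v(r)=\max\{a_v(r)-l_v(r),0\}$. When $P=1$, payments reduce to $p_k(r)=r_v\,l_k(r)$ (principle of proportionality); this is called the base model. *)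

theory Defs
  imports Complex_Main
begin

text \<open>Contracts: Debt debtor creditor weight priority;
  CDS debtor creditor reference_entity weight priority.\<close>
datatype 'b contract =
    Debt 'b 'b real nat
  | CDS 'b 'b 'b real nat

fun debtor :: "'b contract \<Rightarrow> 'b" where
  "debtor (Debt u v c p) = u"
| "debtor (CDS u v w c p) = u"

fun creditor :: "'b contract \<Rightarrow> 'b" where
  "creditor (Debt u v c p) = v"
| "creditor (CDS u v w c p) = v"

fun weight :: "'b contract \<Rightarrow> real" where
  "weight (Debt u v c p) = c"
| "weight (CDS u v w c p) = c"

fun prio :: "'b contract \<Rightarrow> nat" where
  "prio (Debt u v c p) = p"
| "prio (CDS u v w c p) = p"

text \<open>A financial system; the finite collection of contracts is a list
  (so that several contracts with identical data are allowed).\<close>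
record 'b fsys =
  banks :: "'b set"
  ext :: "'b \<Rightarrow> real"
  nprio :: nat
  contracts :: "'b contract list"

definition wf_contract :: "'b fsys \<Rightarrow> 'b contract \<Rightarrow> bool" where
  "wf_contract S k \<longleftrightarrow>
     debtor k \<in> banks S \<and> creditor k \<in> banks S \<and> debtor k \<noteq> creditor k \<and>
     weight k > 0 \<and> 1 \<le> prio k \<and> prio k \<le> nprio S \<and>
     (case k of Debt u v c p \<Rightarrow> True
      | CDS u v w c p \<Rightarrow> w \<in> banks S \<and> w \<noteq> u \<and> w \<noteq> v \<and>
           (\<exists>k'\<in>set (contracts S). \<exists>v' c' p'. k' = Debt w v' c' p' \<and> c' > 0))"

definition wf_fsys :: "'b fsys \<Rightarrow> bool" where
  "wf_fsys S \<longleftrightarrow> finite (banks S) \<and> (\<forall>v\<in>banks S. ext S v \<ge> 0) \<and> nprio S \<ge> 1 \<and>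
     (\<forall>k\<in>set (contracts S). wf_contract S k)"

definition base_model :: "'b fsys \<Rightarrow> bool" where
  "base_model S \<longleftrightarrow> wf_fsys S \<and> nprio S = 1"

fun liab :: "('b \<Rightarrow> real) \<Rightarrow> 'b contract \<Rightarrow> real" where
  "liab r (Debt u v c p) = c"
| "liab r (CDS u v w c p) = c * (1 - r w)"

definition liab_bank :: "'b fsys \<Rightarrow> ('b \<Rightarrow> real) \<Rightarrow> 'b \<Rightarrow> real" where
  "liab_bank S r v = sum_list (map (liab r) (filter (\<lambda>k. debtor k = v) (contracts S)))"

definition liab_prio :: "'b fsys \<Rightarrow> ('b \<Rightarrow> real) \<Rightarrow> 'b \<Rightarrow> nat \<Rightarrow> real" where
  "liab_prio S r v \<rho> =
     sum_list (map (liab r) (filter (\<lambda>k. debtor k = v \<and> prio k = \<rho>) (contracts S)))"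

definition liab_upto :: "'b fsys \<Rightarrow> ('b \<Rightarrow> real) \<Rightarrow> 'b \<Rightarrow> nat \<Rightarrow> real" where
  "liab_upto S r v \<rho> = (\<Sum>i=1..\<rho>. liab_prio S r v i)"

definition pay :: "'b fsys \<Rightarrow> ('b \<Rightarrow> real) \<Rightarrow> 'b contract \<Rightarrow> real" where
  "pay S r k =
     (let v = debtor k; \<rho> = prio k; L = liab_prio S r v \<rho> in
      if L = 0 then 0
      else liab r k * min 1 (max 0 ((r v * liab_bank S r v - liab_upto S r v (\<rho> - 1)) / L)))"

definition assets :: "'b fsys \<Rightarrow> ('b \<Rightarrow> real) \<Rightarrow> 'b \<Rightarrow> real" where
  "assets S r v = ext S v + sum_list (map (pay S r) (filter (\<lambda>k. creditor k = v) (contracts S)))"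

definition is_solution :: "'b fsys \<Rightarrow> ('b \<Rightarrow> real) \<Rightarrow> bool" where
  "is_solution S r \<longleftrightarrow>
     (\<forall>v\<in>banks S. 0 \<le> r v \<and> r v \<le> 1 \<and>
        (assets S r v \<ge> liab_bank S r v \<longrightarrow> r v = 1) \<and>
        (assets S r v < liab_bank S r v \<longrightarrow> r v = assets S r v / liab_bank S r v))"

definition unique_solution :: "'b fsys \<Rightarrow> ('b \<Rightarrow> real) \<Rightarrow> bool" where
  "unique_solution S r \<longleftrightarrow> is_solution S r \<and>
     (\<forall>r'. is_solution S r' \<longrightarrow> (\<forall>v\<in>banks S. r' v = r v))"

definition payoff :: "'b fsys \<Rightarrow> ('b \<Rightarrow> real) \<Rightarrow> 'b \<Rightarrow> real" where
  "payoff S r v = max (assets S r v - liab_bank S r v) 0"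

definition delete_contract :: "'b contract \<Rightarrow> 'b fsys \<Rightarrow> 'b fsys" where
  "delete_contract k S = S\<lparr>contracts := remove1 k (contracts S)\<rparr>"

text \<open>Strategy True = C (cooperate: delete the debt), False = D.\<close>
definition game_sys :: "'b fsys \<Rightarrow> 'b contract \<Rightarrow> 'b contract \<Rightarrow> bool \<Rightarrow> bool \<Rightarrow> 'b fsys" where
  "game_sys S k1 k2 s1 s2 =
     (if s1 then delete_contract k1 else id) ((if s2 then delete_contract k2 else id) S)"

end

theory Submission imports Defs begin
definition S0 :: "nat fsys" where "S0 = \<lparr>banks = {0,1,2,3}, ext = (\<lambda>v. if v=0 then 5/2 else if v = 3 then 0 else 3), nprio = 1,
  contracts = [Debt 0 1 25 1, Debt 0 2 25 1, CDS 1 3 0 (5/3) 1, CDS 2 3 0 (5/3) 1]\<rparr>"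

definition T where "T cs = (\<lparr>banks = {0,1,2,3}, ext = (\<lambda>v. if v=0 then 5/2 else if v = 3 then 0 else 3), nprio = 1,
  contracts = cs\<rparr> :: nat fsys)"

lemma CC: "unique_solution (T [CDS 1 3 0 (5/3) 1, CDS 2 3 0 (5/3) 1]) (\<lambda>v. if v = 0 then 1 else 1)"
  (is "unique_solution ?T _")
  unfolding unique_solution_def
proof
  show "is_solution ?T (\<lambda>v. if v = 0 then 1 else 1)"
    by (simp add: T_def is_solution_def assets_def liab_bank_def pay_def liab_prio_def liab_upto_def)
  show "\<forall>r'. is_solution ?T r' \<longrightarrow> (\<forall>v\<in>banks ?T. r' v = (\<lambda>v. if v = 0 then 1 else 1) v)"
  proof (intro allI impI)
    fix r' assume "is_solution ?T r'"
    hence h: "\<forall>v\<in>{0,1,2,3}. 0 \<le> r' v \<and> r' v \<le> 1 \<and>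
        (assets ?T r' v \<ge> liab_bank ?T r' v \<longrightarrow> r' v = 1) \<and>
        (assets ?T r' v < liab_bank ?T r' v \<longrightarrow> r' v = assets ?T r' v / liab_bank ?T r' v)"
      by (simp add: is_solution_def T_def)
    have h0: "r' 0 = 1" using h by (simp add: T_def assets_def liab_bank_def)
    have h1: "r' 1 = 1" "r' 2 = 1" "r' 3 = 1" using h h0 by (auto simp add: T_def assets_def liab_bank_def pay_def liab_prio_def)
    show "\<forall>v\<in>banks ?T. r' v = (\<lambda>v. if v = 0 then 1 else 1) v" using h0 h1 by (simp add: T_def)
  qed
qed

lemma CCg: "game_sys S0 (Debt 0 1 25 1) (Debt 0 2 25 1) True True = T [CDS 1 3 0 (5/3) 1, CDS 2 3 0 (5/3) 1]"
  by (simp add: game_sys_def S0_def T_def delete_contract_def)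

lemma CCp: "payoff (T [CDS 1 3 0 (5/3) 1, CDS 2 3 0 (5/3) 1]) (\<lambda>v. if v = 0 then 1 else 1) 1 = 3"
  "payoff (T [CDS 1 3 0 (5/3) 1, CDS 2 3 0 (5/3) 1]) (\<lambda>v. if v = 0 then 1 else 1) 2 = 3"
  by (simp_all add: T_def payoff_def assets_def liab_bank_def pay_def liab_prio_def liab_upto_def)

lemma CD: "unique_solution (T [Debt 0 2 25 1, CDS 1 3 0 (5/3) 1, CDS 2 3 0 (5/3) 1]) (\<lambda>v. if v = 0 then 1/10 else 1)"
  (is "unique_solution ?T _")
  unfolding unique_solution_def
proof
  show "is_solution ?T (\<lambda>v. if v = 0 then 1/10 else 1)"
    by (simp add: T_def is_solution_def assets_def liab_bank_def pay_def liab_prio_def liab_upto_def)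
  show "\<forall>r'. is_solution ?T r' \<longrightarrow> (\<forall>v\<in>banks ?T. r' v = (\<lambda>v. if v = 0 then 1/10 else 1) v)"
  proof (intro allI impI)
    fix r' assume "is_solution ?T r'"
    hence h: "\<forall>v\<in>{0,1,2,3}. 0 \<le> r' v \<and> r' v \<le> 1 \<and>
        (assets ?T r' v \<ge> liab_bank ?T r' v \<longrightarrow> r' v = 1) \<and>
        (assets ?T r' v < liab_bank ?T r' v \<longrightarrow> r' v = assets ?T r' v / liab_bank ?T r' v)"
      by (simp add: is_solution_def T_def)
    have h0: "r' 0 = 1/10" using h by (simp add: T_def assets_def liab_bank_def)
    have h1: "r' 1 = 1" "r' 2 = 1" "r' 3 = 1" using h h0 by (auto simp add: T_def assets_def liab_bank_def pay_def liab_prio_def)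
    show "\<forall>v\<in>banks ?T. r' v = (\<lambda>v. if v = 0 then 1/10 else 1) v" using h0 h1 by (simp add: T_def)
  qed
qed

lemma CDg: "game_sys S0 (Debt 0 1 25 1) (Debt 0 2 25 1) True False = T [Debt 0 2 25 1, CDS 1 3 0 (5/3) 1, CDS 2 3 0 (5/3) 1]"
  by (simp add: game_sys_def S0_def T_def delete_contract_def)

lemma CDp: "payoff (T [Debt 0 2 25 1, CDS 1 3 0 (5/3) 1, CDS 2 3 0 (5/3) 1]) (\<lambda>v. if v = 0 then 1/10 else 1) 1 = 3/2"
  "payoff (T [Debt 0 2 25 1, CDS 1 3 0 (5/3) 1, CDS 2 3 0 (5/3) 1]) (\<lambda>v. if v = 0 then 1/10 else 1) 2 = 4"
  by (simp_all add: T_def payoff_def assets_def liab_bank_def pay_def liab_prio_def liab_upto_def)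

lemma DC: "unique_solution (T [Debt 0 1 25 1, CDS 1 3 0 (5/3) 1, CDS 2 3 0 (5/3) 1]) (\<lambda>v. if v = 0 then 1/10 else 1)"
  (is "unique_solution ?T _")
  unfolding unique_solution_def
proof
  show "is_solution ?T (\<lambda>v. if v = 0 then 1/10 else 1)"
    by (simp add: T_def is_solution_def assets_def liab_bank_def pay_def liab_prio_def liab_upto_def)
  show "\<forall>r'. is_solution ?T r' \<longrightarrow> (\<forall>v\<in>banks ?T. r' v = (\<lambda>v. if v = 0 then 1/10 else 1) v)"
  proof (intro allI impI)
    fix r' assume "is_solution ?T r'"
    hence h: "\<forall>v\<in>{0,1,2,3}. 0 \<le> r' v \<and> r' v \<le> 1 \<and>
        (assets ?T r' v \<ge> liab_bank ?T r' v \<longrightarrow> r' v = 1) \<and>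
        (assets ?T r' v < liab_bank ?T r' v \<longrightarrow> r' v = assets ?T r' v / liab_bank ?T r' v)"
      by (simp add: is_solution_def T_def)
    have h0: "r' 0 = 1/10" using h by (simp add: T_def assets_def liab_bank_def)
    have h1: "r' 1 = 1" "r' 2 = 1" "r' 3 = 1" using h h0 by (auto simp add: T_def assets_def liab_bank_def pay_def liab_prio_def)
    show "\<forall>v\<in>banks ?T. r' v = (\<lambda>v. if v = 0 then 1/10 else 1) v" using h0 h1 by (simp add: T_def)
  qed
qed

lemma DCg: "game_sys S0 (Debt 0 1 25 1) (Debt 0 2 25 1) False True = T [Debt 0 1 25 1, CDS 1 3 0 (5/3) 1, CDS 2 3 0 (5/3) 1]"
  by (simp add: game_sys_def S0_def T_def delete_contract_def)

lemma DCp: "payoff (T [Debt 0 1 25 1, CDS 1 3 0 (5/3) 1, CDS 2 3 0 (5/3) 1]) (\<lambda>v. if v = 0 then 1/10 else 1) 1 = 4"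
  "payoff (T [Debt 0 1 25 1, CDS 1 3 0 (5/3) 1, CDS 2 3 0 (5/3) 1]) (\<lambda>v. if v = 0 then 1/10 else 1) 2 = 3/2"
  by (simp_all add: T_def payoff_def assets_def liab_bank_def pay_def liab_prio_def liab_upto_def)

lemma DD: "unique_solution (T [Debt 0 1 25 1, Debt 0 2 25 1, CDS 1 3 0 (5/3) 1, CDS 2 3 0 (5/3) 1]) (\<lambda>v. if v = 0 then 1/20 else 1)"
  (is "unique_solution ?T _")
  unfolding unique_solution_def
proof
  show "is_solution ?T (\<lambda>v. if v = 0 then 1/20 else 1)"
    by (simp add: T_def is_solution_def assets_def liab_bank_def pay_def liab_prio_def liab_upto_def)
  show "\<forall>r'. is_solution ?T r' \<longrightarrow> (\<forall>v\<in>banks ?T. r' v = (\<lambda>v. if v = 0 then 1/20 else 1) v)"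
  proof (intro allI impI)
    fix r' assume "is_solution ?T r'"
    hence h: "\<forall>v\<in>{0,1,2,3}. 0 \<le> r' v \<and> r' v \<le> 1 \<and>
        (assets ?T r' v \<ge> liab_bank ?T r' v \<longrightarrow> r' v = 1) \<and>
        (assets ?T r' v < liab_bank ?T r' v \<longrightarrow> r' v = assets ?T r' v / liab_bank ?T r' v)"
      by (simp add: is_solution_def T_def)
    have h0: "r' 0 = 1/20" using h by (simp add: T_def assets_def liab_bank_def)
    have h1: "r' 1 = 1" "r' 2 = 1" "r' 3 = 1" using h h0 by (auto simp add: T_def assets_def liab_bank_def pay_def liab_prio_def)
    show "\<forall>v\<in>banks ?T. r' v = (\<lambda>v. if v = 0 then 1/20 else 1) v" using h0 h1 by (simp add: T_def)
  qed
qed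

lemma DDg: "game_sys S0 (Debt 0 1 25 1) (Debt 0 2 25 1) False False = T [Debt 0 1 25 1, Debt 0 2 25 1, CDS 1 3 0 (5/3) 1, CDS 2 3 0 (5/3) 1]"
  by (simp add: game_sys_def S0_def T_def delete_contract_def)

lemma DDp: "payoff (T [Debt 0 1 25 1, Debt 0 2 25 1, CDS 1 3 0 (5/3) 1, CDS 2 3 0 (5/3) 1]) (\<lambda>v. if v = 0 then 1/20 else 1) 1 = 8/3"
  "payoff (T [Debt 0 1 25 1, Debt 0 2 25 1, CDS 1 3 0 (5/3) 1, CDS 2 3 0 (5/3) 1]) (\<lambda>v. if v = 0 then 1/20 else 1) 2 = 8/3"
  by (simp_all add: T_def payoff_def assets_def liab_bank_def pay_def liab_prio_def liab_upto_def)

theorem mainTheorem10: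
  shows "\<exists>(S :: nat fsys) u v1 v2 c1 c2 p1 p2 q1 q2.
    base_model S \<and> u \<in> banks S \<and> v1 \<in> banks S \<and> v2 \<in> banks S \<and>
    u \<noteq> v1 \<and> u \<noteq> v2 \<and> v1 \<noteq> v2 \<and>
    Debt u v1 c1 p1 \<in> set (contracts S) \<and> c1 > 0 \<and>
    Debt u v2 c2 p2 \<in> set (contracts S) \<and> c2 > 0 \<and>
    (\<forall>s1 s2. \<exists>r. unique_solution (game_sys S (Debt u v1 c1 p1) (Debt u v2 c2 p2) s1 s2) r \<and>
        payoff (game_sys S (Debt u v1 c1 p1) (Debt u v2 c2 p2) s1 s2) r v1 = q1 s1 s2 \<and>
        payoff (game_sys S (Debt u v1 c1 p1) (Debt u v2 c2 p2) s1 s2) r v2 = q2 s1 s2) \<and>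
    q1 True True = 3 \<and> q2 True True = 3 \<and>
    q1 False False = 8/3 \<and> q2 False False = 8/3 \<and>
    q1 True False = 3/2 \<and> q2 True False = 4 \<and>
    q1 False True = 4 \<and> q2 False True = 3/2 \<and>
    (\<forall>s2. q1 False s2 > q1 True s2) \<and> (\<forall>s1. q2 s1 False > q2 s1 True) \<and>
    q1 True True > q1 False False \<and> q2 True True > q2 False False"
proof -
  define q1 where "q1 = (\<lambda>s1 s2. if s1 then (if s2 then 3 else 3/2) else (if s2 then 4 else 8/3::real))"
  define q2 where "q2 = (\<lambda>s1 s2. if s1 then (if s2 then 3 else 4) else (if s2 then 3/2 else 8/3::real))"
  have bm: "base_model S0"
    by (simp add: S0_def base_model_def wf_fsys_def wf_contract_def)
  have g: "\<forall>s1 s2. \<exists>r. unique_solution (game_sys S0 (Debt 0 1 25 1) (Debt 0 2 25 1) s1 s2) r \<and>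
        payoff (game_sys S0 (Debt 0 1 25 1) (Debt 0 2 25 1) s1 s2) r 1 = q1 s1 s2 \<and>
        payoff (game_sys S0 (Debt 0 1 25 1) (Debt 0 2 25 1) s1 s2) r 2 = q2 s1 s2"
  proof (intro allI)
    fix s1 s2 show "\<exists>r. unique_solution (game_sys S0 (Debt 0 1 25 1) (Debt 0 2 25 1) s1 s2) r \<and>
        payoff (game_sys S0 (Debt 0 1 25 1) (Debt 0 2 25 1) s1 s2) r 1 = q1 s1 s2 \<and>
        payoff (game_sys S0 (Debt 0 1 25 1) (Debt 0 2 25 1) s1 s2) r 2 = q2 s1 s2"
    proof (cases s1; cases s2)
      assume "s1" "s2" thus ?thesis using CCg CC CCp by (intro exI[of _ "\<lambda>v. if v = 0 then 1 else 1"]) (simp add: q1_def q2_def)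
    next
      assume "s1" "\<not>s2" thus ?thesis using CDg CD CDp by (intro exI[of _ "\<lambda>v. if v = 0 then 1/10 else 1"]) (simp add: q1_def q2_def)
    next
      assume "\<not>s1" "s2" thus ?thesis using DCg DC DCp by (intro exI[of _ "\<lambda>v. if v = 0 then 1/10 else 1"]) (simp add: q1_def q2_def)
    next
      assume "\<not>s1" "\<not>s2" thus ?thesis using DDg DD DDp by (intro exI[of _ "\<lambda>v. if v = 0 then 1/20 else 1"]) (simp add: q1_def q2_def)
    qed
  qed
  show ?thesis
    apply (rule exI[of _ S0], rule exI[of _ 0], rule exI[of _ 1], rule exI[of _ 2],
      rule exI[of _ 25], rule exI[of _ 25], rule exI[of _ 1], rule exI[of _ 1], rule exI[of _ q1], rule exI[of _ q2])
    using bm g by (simp add: S0_def q1_def q2_def)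
qed

end
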